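(* Let $X$, $Y$ be racks. (i) If there are $y_1\neq y_2\in Y$ and $x_1\neq x_2\in X$ with $y_1\triangleright y_2=y_2$ and $x_1\triangleright(x_2\triangleright(x_1\triangleright x_2))\neq x_2$, then the product rack $X\times Y$ is of type D. (ii) If there are pairwise distinct $y_1,\dots,y_4\in Y$ and $x_1,\dots,x_4\in X$ with $y_i\triangleright y_j=y_j$ and $x_i\triangleright x_j\neq x_j$ for all $i\neq j$, then $X\times Y$ is of type F. (iii) Let $X^{(2)}=X_1\sqcup X_2$, where $\varphi_i:X\to X_i$ are bijections onto disjoint sets, with rack structure $\varphi_i(x)\triangleright\varphi_j(y)=\varphi_j(x\triangleright y)$ for $i,j\in\{1,2\}$. If there are $x_1\neq x_2\in X$ with $x_1\triangleright(x_2\triangleright(x_1\triangleright x_2))\neq x_2$, then $X^{(2)}$ is of type D.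
   Context: Rack: nonempty set with operation $\triangleright$, each left translation bijective, self-distributive. The product rack has $(x,y)\triangleright(x',y')=(x\triangleright x',y\triangleright y')$. A subrack $Z$ is decomposable if $Z=R\sqcup S$ with nonempty subracks $R,S$, $Z\triangleright R=R$, $Z\triangleright S=S$. Type D: there is a decomposable subrack $R\sqcup S$ and $r\in R$, $s\in S$ with $r\triangleright(s\triangleright(r\triangleright s))\neq s$. Type F: there are pairwise disjoint subracks $R_1,\dots,R_4$, $r_a\in R_a$, with $R_a\triangleright R_b=R_b$ and $r_a\triangleright r_b\neq r_b$ for all $a\neq b$. *)

theory Defs
  imports Main
begin

text \<open>A rack is given by a carrier set and a binary operation on it
 (x \<triangleright> y written as op x y).\<close>

definition rack :: "'a set \<Rightarrow> ('a \<Rightarrow> 'a \<Rightarrow> 'a) \<Rightarrow> bool" where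
  "rack X op \<longleftrightarrow> X \<noteq> {}
     \<and> (\<forall>x\<in>X. \<forall>y\<in>X. op x y \<in> X)
     \<and> (\<forall>x\<in>X. bij_betw (op x) X X)
     \<and> (\<forall>x\<in>X. \<forall>y\<in>X. \<forall>z\<in>X. op x (op y z) = op (op x y) (op x z))"

definition subrack :: "'a set \<Rightarrow> 'a set \<Rightarrow> ('a \<Rightarrow> 'a \<Rightarrow> 'a) \<Rightarrow> bool" where
  "subrack Z X op \<longleftrightarrow> Z \<subseteq> X \<and> rack Z op"

definition act_set :: "('a \<Rightarrow> 'a \<Rightarrow> 'a) \<Rightarrow> 'a set \<Rightarrow> 'a set \<Rightarrow> 'a set" where
  "act_set op A B = {op a b | a b. a \<in> A \<and> b \<in> B}"

definition decomposition :: "'a set \<Rightarrow> ('a \<Rightarrow> 'a \<Rightarrow> 'a) \<Rightarrow> 'a set \<Rightarrow> 'a set \<Rightarrow> bool" where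
  "decomposition X op R S \<longleftrightarrow>
     subrack (R \<union> S) X op \<and> R \<inter> S = {} \<and>
     subrack R X op \<and> subrack S X op \<and>
     act_set op (R \<union> S) R = R \<and> act_set op (R \<union> S) S = S"

definition type_D :: "'a set \<Rightarrow> ('a \<Rightarrow> 'a \<Rightarrow> 'a) \<Rightarrow> bool" where
  "type_D X op \<longleftrightarrow> (\<exists>R S r s. decomposition X op R S \<and> r \<in> R \<and> s \<in> S \<and>
        op r (op s (op r s)) \<noteq> s)"

definition type_F :: "'a set \<Rightarrow> ('a \<Rightarrow> 'a \<Rightarrow> 'a) \<Rightarrow> bool" where
  "type_F X op \<longleftrightarrow> (\<exists>(R :: nat \<Rightarrow> 'a set) (r :: nat \<Rightarrow> 'a).
        (\<forall>a<4. subrack (R a) X op \<and> r a \<in> R a) \<and>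
        (\<forall>a<4. \<forall>b<4. a \<noteq> b \<longrightarrow>
            R a \<inter> R b = {} \<and> act_set op (R a) (R b) = R b \<and> op (r a) (r b) \<noteq> r b))"

definition prod_op :: "('a \<Rightarrow> 'a \<Rightarrow> 'a) \<Rightarrow> ('b \<Rightarrow> 'b \<Rightarrow> 'b) \<Rightarrow> 'a \<times> 'b \<Rightarrow> 'a \<times> 'b \<Rightarrow> 'a \<times> 'b" where
  "prod_op opX opY = (\<lambda>(x, y) (x', y'). (opX x x', opY y y'))"

end

theory Submission
  imports Defs
begin


lemma rack_intro:
  assumes "W \<noteq> {}" "\<forall>p\<in>W. bij_betw (op p) W W"
    "\<forall>x\<in>W. \<forall>y\<in>W. \<forall>z\<in>W. op x (op y z) = op (op x y) (op x z)"
  shows "rack W op"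
  using assms unfolding rack_def bij_betw_def by blast

lemma rack_inj: "rack Y op \<Longrightarrow> a \<in> Y \<Longrightarrow> inj_on (op a) Y"
  unfolding rack_def bij_betw_def by blast
lemma rack_img: "rack Y op \<Longrightarrow> a \<in> Y \<Longrightarrow> op a ` Y = Y"
  unfolding rack_def bij_betw_def by blast
lemma rack_cl: "rack Y op \<Longrightarrow> a \<in> Y \<Longrightarrow> b \<in> Y \<Longrightarrow> op a b \<in> Y"
  unfolding rack_def by blast
lemma rack_sd: "rack Y op \<Longrightarrow> a \<in> Y \<Longrightarrow> b \<in> Y \<Longrightarrow> c \<in> Y \<Longrightarrow> op a (op b c) = op (op a b) (op a c)"
  unfolding rack_def by blast
lemma rack_surj: "rack Y op \<Longrightarrow> a \<in> Y \<Longrightarrow> w \<in> Y \<Longrightarrow> \<exists>u\<in>Y. op a u = w"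
  using rack_img by (metis imageE)

inductive_set orb :: "'b set \<Rightarrow> ('b\<Rightarrow>'b\<Rightarrow>'b) \<Rightarrow> 'b set \<Rightarrow> 'b \<Rightarrow> 'b set"
  for Y op G y0 where
  base: "y0 \<in> Y \<Longrightarrow> y0 \<in> orb Y op G y0"
| fwd: "z \<in> orb Y op G y0 \<Longrightarrow> a \<in> G \<Longrightarrow> op a z \<in> orb Y op G y0"
| bwd: "z \<in> orb Y op G y0 \<Longrightarrow> a \<in> G \<Longrightarrow> u \<in> Y \<Longrightarrow> op a u = z \<Longrightarrow> u \<in> orb Y op G y0"

lemma orb_sub: assumes "rack Y op" "G \<subseteq> Y" "z \<in> orb Y op G y0" shows "z \<in> Y"
  using assms(3) by induct (meson assms(1,2) rack_cl subsetD)+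

lemma orb_I1:
  assumes r: "rack Y op" and G: "G \<subseteq> Y" and y0: "y0 \<in> Y"
    and com: "\<forall>a\<in>G. \<forall>w\<in>Y. op y0 (op a w) = op a (op y0 w)"
    and z: "z \<in> orb Y op G y0"
  shows "\<forall>w\<in>Y. op z w = op y0 w"
  using z
proof induct
  case base then show ?case by simp
next
  case (fwd z a)
  have zY: "z \<in> Y" using orb_sub[OF r G fwd(1)] .
  have aY: "a \<in> Y" using fwd G by auto
  show ?case
  proof
    fix w assume w: "w \<in> Y"
    obtain w' where w': "w' \<in> Y" "op a w' = w" using rack_surj[OF r aY w] by blast
    have "op (op a z) w = op (op a z) (op a w')" using w' by simp
    also have "\<dots> = op a (op z w')" using rack_sd[OF r aY zY w'(1)] by simp
    also have "\<dots> = op a (op y0 w')" using fwd w' by simp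
    also have "\<dots> = op y0 (op a w')" by (metis com fwd(3) w'(1))
    finally show "op (op a z) w = op y0 w" using w' by simp
  qed
next
  case (bwd z a u)
  have aY: "a \<in> Y" using bwd G by auto
  show ?case
  proof
    fix w assume w: "w \<in> Y"
    have "op a (op u w) = op (op a u) (op a w)" using rack_sd[OF r aY bwd(4) w] .
    also have "\<dots> = op y0 (op a w)" using bwd rack_cl[OF r aY w] by simp
    also have "\<dots> = op a (op y0 w)" using com bwd w by simp
    finally show "op u w = op y0 w"
      using rack_inj[OF r aY] rack_cl[OF r bwd(4) w] rack_cl[OF r y0 w] by (meson inj_onD)
  qed
qed

lemma orb_fix:
  assumes r: "rack Y op" and G: "G \<subseteq> Y" and c: "c \<in> Y"
    and com: "\<forall>a\<in>G. \<forall>w\<in>Y. op c (op a w) = op a (op c w)"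
    and fx: "op c y0 = y0"
    and z: "z \<in> orb Y op G y0"
  shows "op c z = z"
  using z
proof induct
  case base then show ?case using fx by simp
next
  case (fwd z a)
  then show ?case using com orb_sub[OF r G fwd(1)] by simp
next
  case (bwd z a u)
  have aY: "a \<in> Y" using bwd G by auto
  have "op a (op c u) = op a u" using com bwd by auto
  then show ?case
    using rack_inj[OF r aY] rack_cl[OF r c bwd(4)] bwd(4) by (meson inj_onD)
qed

lemma orb_single:
  assumes r: "rack Y op" and G: "G \<subseteq> Y" and fx: "\<forall>a\<in>G. op a y0 = y0"
    and z: "z \<in> orb Y op G y0"
  shows "z = y0"
  using z
proof induct
  case base then show ?case by simp
next
  case (fwd z a) then show ?case using fx by simp
next
  case (bwd z a u)
  have aY: "a \<in> Y" using bwd G by auto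
  have y0: "y0 \<in> Y" using orb_sub[OF r G bwd(1)] bwd by simp
  have "op a u = op a y0" using bwd fx by simp
  then show ?case using rack_inj[OF r aY] bwd(4) y0 by (meson inj_onD)
qed

lemma orb_avoid:
  assumes r: "rack Y op" and G: "G \<subseteq> Y" and t: "t \<in> Y" and fx: "\<forall>a\<in>G. op a t = t"
    and z: "z \<in> orb Y op G y0"
  shows "z = t \<longrightarrow> y0 = t"
  using z
proof induct
  case base then show ?case by simp
next
  case (fwd z a)
  have aY: "a \<in> Y" using fwd G by auto
  have "op a z = op a t \<longrightarrow> z = t"
    using rack_inj[OF r aY] orb_sub[OF r G fwd(1)] t by (meson inj_onD)
  then show ?case using fwd fx by auto
next
  case (bwd z a u) then show ?case using fx by auto
qed

lemma orb_bij:
  assumes r: "rack Y op" and G: "G \<subseteq> Y" and a: "a \<in> G"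
  shows "bij_betw (op a) (orb Y op G y0) (orb Y op G y0)"
proof -
  have aY: "a \<in> Y" using a G by auto
  have sub: "orb Y op G y0 \<subseteq> Y" using orb_sub[OF r G] by blast
  have "inj_on (op a) (orb Y op G y0)" using inj_on_subset[OF rack_inj[OF r aY] sub] .
  moreover have "op a ` orb Y op G y0 = orb Y op G y0"
  proof
    show "op a ` orb Y op G y0 \<subseteq> orb Y op G y0" using orb.fwd[OF _ a] by blast
    show "orb Y op G y0 \<subseteq> op a ` orb Y op G y0"
    proof
      fix z assume z: "z \<in> orb Y op G y0"
      obtain u where u: "u \<in> Y" "op a u = z" using rack_surj[OF r aY, of z] sub z by blast
      then have "u \<in> orb Y op G y0" using orb.bwd[OF z a u(1)] by blast
      then show "z \<in> op a ` orb Y op G y0" using u by blast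
    qed
  qed
  ultimately show ?thesis unfolding bij_betw_def by blast
qed

lemma fix_bij: "(\<forall>z\<in>A. f z = z) \<Longrightarrow> bij_betw f A A"
  by (metis bij_betw_cong bij_betw_id id_apply)

lemma cong_bij: "A \<subseteq> Y \<Longrightarrow> (\<forall>w\<in>Y. f w = g w) \<Longrightarrow> bij_betw g A B \<Longrightarrow> bij_betw f A B"
  by (metis bij_betw_cong subsetD)

lemma rack_commute: "rack Y op \<Longrightarrow> a \<in> Y \<Longrightarrow> b \<in> Y \<Longrightarrow> op a b = b \<Longrightarrow>
   \<forall>w\<in>Y. op a (op b w) = op b (op a w)"
  using rack_sd by metis

lemma prod_op_eq: "prod_op opX opY (x, c) = map_prod (opX x) (opY c)"
  by (auto simp: prod_op_def fun_eq_iff)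

lemma prod_op_app[simp]: "prod_op opX opY (a, b) (c, d) = (opX a c, opY b d)"
  by (simp add: prod_op_def)

lemma prod_subrack:
  assumes rX: "rack X opX" and rY: "rack Y opY" and C: "C \<subseteq> Y" "C \<noteq> {}"
    and b: "\<forall>c\<in>C. bij_betw (opY c) C C"
  shows "subrack (X \<times> C) (X \<times> Y) (prod_op opX opY)"
  unfolding subrack_def
proof
  show "X \<times> C \<subseteq> X \<times> Y" using C by auto
  have Xne: "X \<noteq> {}" using rX unfolding rack_def by blast
  show "rack (X \<times> C) (prod_op opX opY)"
  proof (rule rack_intro)
    show "X \<times> C \<noteq> {}" using Xne C by auto
    show "\<forall>p\<in>X \<times> C. bij_betw (prod_op opX opY p) (X \<times> C) (X \<times> C)"
    proof
      fix p assume "p \<in> X \<times> C"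
      then obtain x c where p: "p = (x, c)" "x \<in> X" "c \<in> C" by blast
      have bx: "bij_betw (opX x) X X" using rX p(2) unfolding rack_def by blast
      show "bij_betw (prod_op opX opY p) (X \<times> C) (X \<times> C)"
        using bij_betw_map_prod[OF bx b[rule_format, OF p(3)]] p(1) by (simp add: prod_op_eq)
    qed
    show "\<forall>x\<in>X \<times> C. \<forall>y\<in>X \<times> C. \<forall>z\<in>X \<times> C. prod_op opX opY x (prod_op opX opY y z) =
        prod_op opX opY (prod_op opX opY x y) (prod_op opX opY x z)"
    proof (intro ballI)
      fix p q w assume "p \<in> X \<times> C" "q \<in> X \<times> C" "w \<in> X \<times> C"
      then obtain a1 b1 a2 b2 a3 b3 where e: "p = (a1, b1)" "q = (a2, b2)" "w = (a3, b3)"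
        and m: "a1 \<in> X" "a2 \<in> X" "a3 \<in> X" "b1 \<in> Y" "b2 \<in> Y" "b3 \<in> Y" using C by blast
      show "prod_op opX opY p (prod_op opX opY q w) =
        prod_op opX opY (prod_op opX opY p q) (prod_op opX opY p w)"
        using rack_sd[OF rX m(1,2,3)] rack_sd[OF rY m(4,5,6)] e by simp
    qed
  qed
qed

lemma prod_act:
  assumes rX: "rack X opX" and D: "D \<noteq> {}"
    and b: "\<forall>d\<in>D. bij_betw (opY d) C C"
  shows "act_set (prod_op opX opY) (X \<times> D) (X \<times> C) = X \<times> C"
proof
  show "act_set (prod_op opX opY) (X \<times> D) (X \<times> C) \<subseteq> X \<times> C"
    using rX b unfolding act_set_def rack_def bij_betw_def by auto
  show "X \<times> C \<subseteq> act_set (prod_op opX opY) (X \<times> D) (X \<times> C)"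
  proof
    fix p assume "p \<in> X \<times> C"
    then obtain x c where p: "p = (x, c)" "x \<in> X" "c \<in> C" by auto
    obtain x0 where x0: "x0 \<in> X" using rX unfolding rack_def by blast
    obtain d where d: "d \<in> D" using D by blast
    obtain x' where x': "x' \<in> X" "opX x0 x' = x" using rack_surj[OF rX x0 p(2)] by blast
    have "c \<in> opY d ` C" using b d p(3) unfolding bij_betw_def by auto
    then obtain c' where c': "c' \<in> C" "opY d c' = c" by blast
    have "p = prod_op opX opY (x0, d) (x', c')" using x' c' p(1) by simp
    moreover have "(x0, d) \<in> X \<times> D" "(x', c') \<in> X \<times> C" using x0 d x' c' by auto
    ultimately show "p \<in> act_set (prod_op opX opY) (X \<times> D) (X \<times> C)"
      unfolding act_set_def by blast
  qed
qed


lemma act_all: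
  assumes "D \<noteq> {}" "\<forall>d\<in>D. bij_betw (op d) C C"
  shows "act_set op D C = C"
proof
  show "act_set op D C \<subseteq> C" using assms(2) unfolding act_set_def bij_betw_def by auto
  show "C \<subseteq> act_set op D C"
  proof
    fix c assume c: "c \<in> C"
    obtain d where d: "d \<in> D" using assms(1) by blast
    have "c \<in> op d ` C" using assms(2) d c unfolding bij_betw_def by auto
    then obtain c' where "c' \<in> C" "op d c' = c" by blast
    then show "c \<in> act_set op D C" unfolding act_set_def using d by blast
  qed
qed

lemma conj_bij:
  assumes "bij_betw \<phi> X X1" "bij_betw g X X" "\<forall>y\<in>X. f (\<phi> y) = \<phi> (g y)"
  shows "bij_betw f X1 X1"
proof -
  have "bij_betw (\<phi> \<circ> g) X X1" using bij_betw_trans assms(1,2) by blast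
  then have "bij_betw (f \<circ> \<phi>) X X1" using bij_betw_cong[of X "f \<circ> \<phi>" "\<phi> \<circ> g" X1] assms(3) by simp
  then show ?thesis using bij_betw_comp_iff[OF assms(1)] by blast
qed

lemma part1:
  assumes rX: "rack X opX" and rY: "rack Y opY"
    and y1: "y1 \<in> Y" and y2: "y2 \<in> Y" and x1: "x1 \<in> X" and x2: "x2 \<in> X"
    and ne: "y1 \<noteq> y2" and f12: "opY y1 y2 = y2"
    and nd: "opX x1 (opX x2 (opX x1 x2)) \<noteq> x2"
  shows "type_D (X \<times> Y) (prod_op opX opY)"
proof -
  define A where "A = orb Y opY {y1, y2} y1"
  define B where "B = orb Y opY {y2} y2"
  have G1: "{y1, y2} \<subseteq> Y" and G2: "{y2} \<subseteq> Y" using y1 y2 by auto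
  have com12: "\<forall>w\<in>Y. opY y1 (opY y2 w) = opY y2 (opY y1 w)"
    using rack_commute[OF rY y1 y2 f12] .
  have hA: "\<forall>z\<in>A. \<forall>w\<in>Y. opY z w = opY y1 w"
    unfolding A_def using orb_I1[OF rY G1 y1] com12 by blast
  have hB: "\<forall>z\<in>B. \<forall>w\<in>Y. opY z w = opY y2 w"
    unfolding B_def using orb_I1[OF rY G2 y2] by blast
  have AY: "A \<subseteq> Y" unfolding A_def using orb_sub[OF rY G1] by blast
  have BY: "B \<subseteq> Y" unfolding B_def using orb_sub[OF rY G2] by blast
  have bA1: "bij_betw (opY y1) A A" unfolding A_def by (rule orb_bij[OF rY G1]) simp
  have bA2: "bij_betw (opY y2) A A" unfolding A_def by (rule orb_bij[OF rY G1]) simp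
  have bB2: "bij_betw (opY y2) B B" unfolding B_def by (rule orb_bij[OF rY G2]) simp
  have bB1: "bij_betw (opY y1) B B"
    unfolding B_def using orb_fix[OF rY G2 y1 _ f12] com12 by (intro fix_bij) blast
  have Ane: "y1 \<in> A" unfolding A_def using y1 by (rule orb.base)
  have Bne: "y2 \<in> B" unfolding B_def using y2 by (rule orb.base)
  have dis: "A \<inter> B = {}"
  proof (rule ccontr)
    assume "A \<inter> B \<noteq> {}"
    then obtain z where z: "z \<in> A" "z \<in> B" by blast
    have eq: "\<forall>w\<in>Y. opY y2 w = opY y1 w" using hA hB z by metis
    have "opY y2 y2 = y2" using eq y2 f12 by simp
    then have "\<forall>a\<in>{y2}. opY a y2 = y2" by simp
    from orb_single[OF rY G2 this z(2)[unfolded B_def]] have zb: "z = y2" .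
    have "\<forall>a\<in>{y1, y2}. opY a y2 = y2" using f12 \<open>opY y2 y2 = y2\<close> by simp
    from orb_avoid[OF rY G1 y2 this z(1)[unfolded A_def]] zb ne show False by simp
  qed
  have bAll: "\<forall>z\<in>A \<union> B. bij_betw (opY z) A A \<and> bij_betw (opY z) B B"
  proof
    fix z assume "z \<in> A \<union> B"
    then show "bij_betw (opY z) A A \<and> bij_betw (opY z) B B"
    proof
      assume z: "z \<in> A"
      show ?thesis using cong_bij[OF AY _ bA1] cong_bij[OF BY _ bB1] hA z by blast
    next
      assume z: "z \<in> B"
      show ?thesis using cong_bij[OF AY _ bA2] cong_bij[OF BY _ bB2] hB z by blast
    qed
  qed
  have bU: "\<forall>z\<in>A \<union> B. bij_betw (opY z) (A \<union> B) (A \<union> B)"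
    using bAll bij_betw_combine dis by blast
  have U: "X \<times> A \<union> X \<times> B = X \<times> (A \<union> B)" by auto
  have "decomposition (X \<times> Y) (prod_op opX opY) (X \<times> A) (X \<times> B)"
    unfolding decomposition_def U
  proof (intro conjI)
    show "subrack (X \<times> (A \<union> B)) (X \<times> Y) (prod_op opX opY)"
      by (rule prod_subrack[OF rX rY _ _ bU]) (use AY BY Ane in auto)
    show "X \<times> A \<inter> X \<times> B = {}" using dis by auto
    show "subrack (X \<times> A) (X \<times> Y) (prod_op opX opY)"
      by (rule prod_subrack[OF rX rY AY]) (use Ane bAll in auto)
    show "subrack (X \<times> B) (X \<times> Y) (prod_op opX opY)"
      by (rule prod_subrack[OF rX rY BY]) (use Bne bAll in auto)
    show "act_set (prod_op opX opY) (X \<times> (A \<union> B)) (X \<times> A) = X \<times> A"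
      by (rule prod_act[OF rX]) (use Ane bAll in auto)
    show "act_set (prod_op opX opY) (X \<times> (A \<union> B)) (X \<times> B) = X \<times> B"
      by (rule prod_act[OF rX]) (use Ane bAll in auto)
  qed
  moreover have "(x1, y1) \<in> X \<times> A" "(x2, y2) \<in> X \<times> B" using x1 x2 Ane Bne by auto
  moreover have "prod_op opX opY (x1, y1) (prod_op opX opY (x2, y2) (prod_op opX opY (x1, y1) (x2, y2))) \<noteq> (x2, y2)"
    using nd by simp
  ultimately show ?thesis unfolding type_D_def by blast
qed

lemma part2:
  assumes rX: "rack X opX" and rY: "rack Y opY"
    and iy: "inj_on ys {..<4::nat}" and ysY: "ys ` {..<4} \<subseteq> Y" and xsX: "xs ` {..<4} \<subseteq> X"
    and h: "\<forall>i<4. \<forall>j<4. i \<noteq> j \<longrightarrow> opY (ys i) (ys j) = ys j \<and> opX (xs i) (xs j) \<noteq> xs j"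
  shows "type_F (X \<times> Y) (prod_op opX opY)"
proof -
  define Ob where "Ob a = orb Y opY {ys a} (ys a)" for a
  have yY: "\<And>a. a < 4 \<Longrightarrow> ys a \<in> Y" using ysY by auto
  have xX: "\<And>a. a < 4 \<Longrightarrow> xs a \<in> X" using xsX by auto
  have G: "\<And>a. a < 4 \<Longrightarrow> {ys a} \<subseteq> Y" using yY by auto
  have hO: "\<And>a z. a < 4 \<Longrightarrow> z \<in> Ob a \<Longrightarrow> \<forall>w\<in>Y. opY z w = opY (ys a) w"
  proof -
    fix a :: nat and z assume a: "a < 4" and z: "z \<in> Ob a"
    show "\<forall>w\<in>Y. opY z w = opY (ys a) w"
      using orb_I1[OF rY G[OF a] yY[OF a] _ z[unfolded Ob_def]] by simp
  qed
  have OY: "\<And>a. a < 4 \<Longrightarrow> Ob a \<subseteq> Y"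
  proof -
    fix a :: nat assume a: "a < 4"
    show "Ob a \<subseteq> Y" unfolding Ob_def using orb_sub[OF rY G[OF a]] by blast
  qed
  have One: "\<And>a. a < 4 \<Longrightarrow> ys a \<in> Ob a" unfolding Ob_def using yY by (simp add: orb.base)
  have bO: "\<And>a b. a < 4 \<Longrightarrow> b < 4 \<Longrightarrow> bij_betw (opY (ys a)) (Ob b) (Ob b)"
  proof -
    fix a b :: nat assume a: "a < 4" and b: "b < 4"
    show "bij_betw (opY (ys a)) (Ob b) (Ob b)"
    proof (cases "a = b")
      case True then show ?thesis unfolding Ob_def using orb_bij[OF rY G[OF b]] by blast
    next
      case False
      have f: "opY (ys a) (ys b) = ys b" using h a b False by simp
      show ?thesis unfolding Ob_def
        using orb_fix[OF rY G[OF b] yY[OF a] _ f] rack_commute[OF rY yY[OF a] yY[OF b] f]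
        by (intro fix_bij) blast
    qed
  qed
  have bOz: "\<And>a b z. a < 4 \<Longrightarrow> b < 4 \<Longrightarrow> z \<in> Ob a \<Longrightarrow> bij_betw (opY z) (Ob b) (Ob b)"
  proof -
    fix a b :: nat and z assume a: "a < 4" and b: "b < 4" and z: "z \<in> Ob a"
    show "bij_betw (opY z) (Ob b) (Ob b)"
      using cong_bij[OF OY[OF b] hO[OF a z] bO[OF a b]] .
  qed
  have dis: "\<And>a b. a < 4 \<Longrightarrow> b < 4 \<Longrightarrow> a \<noteq> b \<Longrightarrow> Ob a \<inter> Ob b = {}"
  proof (rule ccontr)
    fix a b :: nat assume a: "a < 4" and b: "b < 4" and ab: "a \<noteq> b" and "Ob a \<inter> Ob b \<noteq> {}"
    then obtain z where z: "z \<in> Ob a" "z \<in> Ob b" by blast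
    have eq: "\<forall>w\<in>Y. opY (ys b) w = opY (ys a) w" using hO[OF a z(1)] hO[OF b z(2)] by simp
    have f: "opY (ys a) (ys b) = ys b" using h a b ab by blast
    have "opY (ys b) (ys b) = ys b" using eq yY[OF b] f by simp
    then have "\<forall>g\<in>{ys b}. opY g (ys b) = ys b" by simp
    from orb_single[OF rY G[OF b] this z(2)[unfolded Ob_def]] have zb: "z = ys b" .
    have "\<forall>g\<in>{ys a}. opY g (ys b) = ys b" using f by simp
    from orb_avoid[OF rY G[OF a] yY[OF b] this z(1)[unfolded Ob_def]] zb have "ys a = ys b" by simp
    then show False using iy a b ab by (auto dest: inj_onD)
  qed
  show ?thesis unfolding type_F_def
  proof (rule exI[of _ "\<lambda>a. X \<times> Ob a"], rule exI[of _ "\<lambda>a. (xs a, ys a)"], intro conjI allI impI)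
    fix a :: nat assume a: "a < 4"
    show "subrack (X \<times> Ob a) (X \<times> Y) (prod_op opX opY)"
      by (rule prod_subrack[OF rX rY OY[OF a]]) (use bOz a One[OF a] in auto)
    show "(xs a, ys a) \<in> X \<times> Ob a" using xX a One by auto
  next
    fix a b :: nat assume a: "a < 4" and b: "b < 4" and ab: "a \<noteq> b"
    show "X \<times> Ob a \<inter> X \<times> Ob b = {}" using dis[OF a b ab] by auto
    show "act_set (prod_op opX opY) (X \<times> Ob a) (X \<times> Ob b) = X \<times> Ob b"
      by (rule prod_act[OF rX]) (use bOz[OF a b] One[OF a] in auto)
    have "opX (xs a) (xs b) \<noteq> xs b" using h a b ab by blast
    then show "prod_op opX opY (xs a, ys a) (xs b, ys b) \<noteq> (xs b, ys b)" by simp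
  qed
qed

lemma part3:
  assumes rX: "rack X opX" and b1: "bij_betw \<phi>1 X X1" and b2: "bij_betw \<phi>2 X X2"
    and dis: "X1 \<inter> X2 = {}"
    and E: "\<forall>x\<in>X. \<forall>y\<in>X.
            op2 (\<phi>1 x) (\<phi>1 y) = \<phi>1 (opX x y) \<and> op2 (\<phi>1 x) (\<phi>2 y) = \<phi>2 (opX x y) \<and>
            op2 (\<phi>2 x) (\<phi>1 y) = \<phi>1 (opX x y) \<and> op2 (\<phi>2 x) (\<phi>2 y) = \<phi>2 (opX x y)"
    and x1: "x1 \<in> X" and x2: "x2 \<in> X" and nd: "opX x1 (opX x2 (opX x1 x2)) \<noteq> x2"
  shows "type_D (X1 \<union> X2) op2"
proof -
  have E1: "\<And>x y. x \<in> X \<Longrightarrow> y \<in> X \<Longrightarrow> op2 (\<phi>1 x) (\<phi>1 y) = \<phi>1 (opX x y)" using E by blast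
  have E2: "\<And>x y. x \<in> X \<Longrightarrow> y \<in> X \<Longrightarrow> op2 (\<phi>1 x) (\<phi>2 y) = \<phi>2 (opX x y)" using E by blast
  have E3: "\<And>x y. x \<in> X \<Longrightarrow> y \<in> X \<Longrightarrow> op2 (\<phi>2 x) (\<phi>1 y) = \<phi>1 (opX x y)" using E by blast
  have E4: "\<And>x y. x \<in> X \<Longrightarrow> y \<in> X \<Longrightarrow> op2 (\<phi>2 x) (\<phi>2 y) = \<phi>2 (opX x y)" using E by blast
  have X1: "X1 = \<phi>1 ` X" using b1 bij_betw_imp_surj_on by metis
  have X2: "X2 = \<phi>2 ` X" using b2 bij_betw_imp_surj_on by metis
  have rep: "\<And>p. p \<in> X1 \<union> X2 \<Longrightarrow> \<exists>x\<in>X. p = \<phi>1 x \<or> p = \<phi>2 x" using X1 X2 by blast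
  have key: "\<And>p. p \<in> X1 \<union> X2 \<Longrightarrow> \<exists>x\<in>X. \<forall>y\<in>X. op2 p (\<phi>1 y) = \<phi>1 (opX x y) \<and> op2 p (\<phi>2 y) = \<phi>2 (opX x y)"
    using rep E by metis
  have bij1: "\<And>p. p \<in> X1 \<union> X2 \<Longrightarrow> bij_betw (op2 p) X1 X1"
  proof -
    fix p assume "p \<in> X1 \<union> X2"
    then obtain x where x: "x \<in> X" "\<forall>y\<in>X. op2 p (\<phi>1 y) = \<phi>1 (opX x y)" using key by blast
    show "bij_betw (op2 p) X1 X1"
      using conj_bij[OF b1 _ x(2)] rX x(1) unfolding rack_def by blast
  qed
  have bij2: "\<And>p. p \<in> X1 \<union> X2 \<Longrightarrow> bij_betw (op2 p) X2 X2"
  proof -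
    fix p assume "p \<in> X1 \<union> X2"
    then obtain x where x: "x \<in> X" "\<forall>y\<in>X. op2 p (\<phi>2 y) = \<phi>2 (opX x y)" using key by blast
    show "bij_betw (op2 p) X2 X2"
      using conj_bij[OF b2 _ x(2)] rX x(1) unfolding rack_def by blast
  qed
  have bij12: "\<And>p. p \<in> X1 \<union> X2 \<Longrightarrow> bij_betw (op2 p) (X1 \<union> X2) (X1 \<union> X2)"
    using bij1 bij2 bij_betw_combine dis by blast
  have sd: "\<forall>a\<in>X1 \<union> X2. \<forall>b\<in>X1 \<union> X2. \<forall>c\<in>X1 \<union> X2. op2 a (op2 b c) = op2 (op2 a b) (op2 a c)"
  proof (intro ballI)
    fix a b c assume a: "a \<in> X1 \<union> X2" and b: "b \<in> X1 \<union> X2" and c: "c \<in> X1 \<union> X2"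
    obtain x where x: "x \<in> X" "a = \<phi>1 x \<or> a = \<phi>2 x" using rep[OF a] by blast
    obtain y where y: "y \<in> X" "b = \<phi>1 y \<or> b = \<phi>2 y" using rep[OF b] by blast
    obtain z where z: "z \<in> X" "c = \<phi>1 z \<or> c = \<phi>2 z" using rep[OF c] by blast
    have cl: "opX x y \<in> X" "opX x z \<in> X" "opX y z \<in> X" using rack_cl[OF rX] x y z by auto
    have s: "opX x (opX y z) = opX (opX x y) (opX x z)" using rack_sd[OF rX x(1) y(1) z(1)] .
    show "op2 a (op2 b c) = op2 (op2 a b) (op2 a c)"
      using x(2) y(2) z(2) by (elim disjE) (simp_all add: E1 E2 E3 E4 x(1) y(1) z(1) cl s)
  qed
  have Xne: "x1 \<in> X" using x1 .
  have n1: "\<phi>1 x1 \<in> X1" and n2: "\<phi>2 x2 \<in> X2" using X1 X2 x1 x2 by auto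
  have "decomposition (X1 \<union> X2) op2 X1 X2"
    unfolding decomposition_def subrack_def
  proof (intro conjI)
    show "rack (X1 \<union> X2) op2" using rack_intro[of "X1 \<union> X2" op2] bij12 sd n1 by blast
    show "rack X1 op2" using rack_intro[of X1 op2] bij1 sd n1 by blast
    show "rack X2 op2" using rack_intro[of X2 op2] bij2 sd n2 by blast
    show "act_set op2 (X1 \<union> X2) X1 = X1" using act_all[of "X1 \<union> X2" op2 X1] bij1 n1 by blast
    show "act_set op2 (X1 \<union> X2) X2 = X2" using act_all[of "X1 \<union> X2" op2 X2] bij2 n1 by blast
  qed (use dis in auto)
  moreover have "op2 (\<phi>1 x1) (op2 (\<phi>2 x2) (op2 (\<phi>1 x1) (\<phi>2 x2))) \<noteq> \<phi>2 x2"
  proof -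
    have cl: "opX x1 x2 \<in> X" "opX x2 (opX x1 x2) \<in> X" "opX x1 (opX x2 (opX x1 x2)) \<in> X"
      using rack_cl[OF rX] x1 x2 by auto
    have "op2 (\<phi>1 x1) (op2 (\<phi>2 x2) (op2 (\<phi>1 x1) (\<phi>2 x2))) = \<phi>2 (opX x1 (opX x2 (opX x1 x2)))"
      using x1 x2 cl by (simp add: E2 E4)
    moreover have "\<phi>2 (opX x1 (opX x2 (opX x1 x2))) \<noteq> \<phi>2 x2"
      using nd cl x2 bij_betw_imp_inj_on[OF b2] by (metis inj_onD)
    ultimately show ?thesis by simp
  qed
  ultimately show ?thesis unfolding type_D_def using n1 n2 by blast
qed

theorem mainTheorem4:
  fixes X :: "'a set" and opX :: "'a \<Rightarrow> 'a \<Rightarrow> 'a"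
    and Y :: "'b set" and opY :: "'b \<Rightarrow> 'b \<Rightarrow> 'b"
  assumes rX: "rack X opX" and rY: "rack Y opY"
  shows
   "((\<exists>y1\<in>Y. \<exists>y2\<in>Y. \<exists>x1\<in>X. \<exists>x2\<in>X. y1 \<noteq> y2 \<and> x1 \<noteq> x2 \<and> opY y1 y2 = y2 \<and>
        opX x1 (opX x2 (opX x1 x2)) \<noteq> x2)
      \<longrightarrow> type_D (X \<times> Y) (prod_op opX opY))
  \<and> ((\<exists>(ys :: nat \<Rightarrow> 'b) (xs :: nat \<Rightarrow> 'a).
        inj_on ys {..<4} \<and> inj_on xs {..<4} \<and> ys ` {..<4} \<subseteq> Y \<and> xs ` {..<4} \<subseteq> X \<and>
        (\<forall>i<4. \<forall>j<4. i \<noteq> j \<longrightarrow> opY (ys i) (ys j) = ys j \<and> opX (xs i) (xs j) \<noteq> xs j))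
      \<longrightarrow> type_F (X \<times> Y) (prod_op opX opY))
  \<and> (\<forall>(\<phi>1 :: 'a \<Rightarrow> 'c) \<phi>2 X1 X2 (op2 :: 'c \<Rightarrow> 'c \<Rightarrow> 'c).
        bij_betw \<phi>1 X X1 \<and> bij_betw \<phi>2 X X2 \<and> X1 \<inter> X2 = {} \<and>
        (\<forall>x\<in>X. \<forall>y\<in>X.
            op2 (\<phi>1 x) (\<phi>1 y) = \<phi>1 (opX x y) \<and> op2 (\<phi>1 x) (\<phi>2 y) = \<phi>2 (opX x y) \<and>
            op2 (\<phi>2 x) (\<phi>1 y) = \<phi>1 (opX x y) \<and> op2 (\<phi>2 x) (\<phi>2 y) = \<phi>2 (opX x y)) \<and>
        (\<exists>x1\<in>X. \<exists>x2\<in>X. x1 \<noteq> x2 \<and> opX x1 (opX x2 (opX x1 x2)) \<noteq> x2)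
      \<longrightarrow> type_D (X1 \<union> X2) op2)"
  
proof (intro conjI impI allI)
  assume "\<exists>y1\<in>Y. \<exists>y2\<in>Y. \<exists>x1\<in>X. \<exists>x2\<in>X. y1 \<noteq> y2 \<and> x1 \<noteq> x2 \<and> opY y1 y2 = y2 \<and>
        opX x1 (opX x2 (opX x1 x2)) \<noteq> x2"
  then show "type_D (X \<times> Y) (prod_op opX opY)"
    by (elim bexE conjE) (rule part1[OF rX rY], assumption+)
next
  assume "\<exists>(ys :: nat \<Rightarrow> 'b) (xs :: nat \<Rightarrow> 'a).
        inj_on ys {..<4} \<and> inj_on xs {..<4} \<and> ys ` {..<4} \<subseteq> Y \<and> xs ` {..<4} \<subseteq> X \<and>
        (\<forall>i<4. \<forall>j<4. i \<noteq> j \<longrightarrow> opY (ys i) (ys j) = ys j \<and> opX (xs i) (xs j) \<noteq> xs j)"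
  then show "type_F (X \<times> Y) (prod_op opX opY)"
    by (elim exE conjE) (rule part2[OF rX rY], assumption+)
next
  fix \<phi>1 :: "'a \<Rightarrow> 'c" and \<phi>2 X1 X2 and op2 :: "'c \<Rightarrow> 'c \<Rightarrow> 'c"
  assume H: "bij_betw \<phi>1 X X1 \<and> bij_betw \<phi>2 X X2 \<and> X1 \<inter> X2 = {} \<and>
        (\<forall>x\<in>X. \<forall>y\<in>X.
            op2 (\<phi>1 x) (\<phi>1 y) = \<phi>1 (opX x y) \<and> op2 (\<phi>1 x) (\<phi>2 y) = \<phi>2 (opX x y) \<and>
            op2 (\<phi>2 x) (\<phi>1 y) = \<phi>1 (opX x y) \<and> op2 (\<phi>2 x) (\<phi>2 y) = \<phi>2 (opX x y)) \<and>
        (\<exists>x1\<in>X. \<exists>x2\<in>X. x1 \<noteq> x2 \<and> opX x1 (opX x2 (opX x1 x2)) \<noteq> x2)"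
  from H have ex: "\<exists>x1\<in>X. \<exists>x2\<in>X. x1 \<noteq> x2 \<and> opX x1 (opX x2 (opX x1 x2)) \<noteq> x2" by (elim conjE)
  from H have h1: "bij_betw \<phi>1 X X1" by (rule conjunct1)
  from H have h2: "bij_betw \<phi>2 X X2" by (elim conjE)
  from H have h3: "X1 \<inter> X2 = {}" by (elim conjE)
  from H have h4: "\<forall>x\<in>X. \<forall>y\<in>X.
            op2 (\<phi>1 x) (\<phi>1 y) = \<phi>1 (opX x y) \<and> op2 (\<phi>1 x) (\<phi>2 y) = \<phi>2 (opX x y) \<and>
            op2 (\<phi>2 x) (\<phi>1 y) = \<phi>1 (opX x y) \<and> op2 (\<phi>2 x) (\<phi>2 y) = \<phi>2 (opX x y)"
    by (elim conjE)
  from ex show "type_D (X1 \<union> X2) op2"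
    by (elim bexE conjE) (rule part3[OF rX h1 h2 h3 h4], assumption+)
qed

end
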